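(* Consider two stochastic systems $\Sigma_1$ and $\Sigma_2$ as described in the context. If $\Sigma_1$ and $\Sigma_2$ have equivalent stochastic external behavior with respect to some subspace relation $\mathcal{R}\subseteq\mathbb{R}^{n_1}\times\mathbb{R}^{n_2}$, then the following conditions hold: \[ \begin{aligned} & p_1') & & \operatorname{im}\begin{bmatrix} B_1 \\ B_2 \end{bmatrix} \subseteq \ker\begin{bmatrix} Q_{1,\tilde n} & -Q_{2,\tilde n} \end{bmatrix},\\ & p_2') & & \operatorname{im}\begin{bmatrix} G_1\mu_1 \\ G_2\mu_2 \end{bmatrix} \subseteq \ker\begin{bmatrix} Q_{1,\tilde n} & -Q_{2,\tilde n} \end{bmatrix},\\ & p_3') & & \exists H\in \mathbb{R}^{l_1\times l_2}: \ \operatorname{im}\begin{bmatrix} G_1 H \\ G_2 \end{bmatrix} \subseteq \ker\begin{bmatrix} Q_{1,\tilde n} & -Q_{2,\tilde n} \end{bmatrix}. \end{aligned} \]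
   Context: For $i=1,2$, $\Sigma_i$ is the discrete-time stochastic linear control system $x_i(t+1)=A_i x_i(t)+B_i u_i(t)+G_i w_i(t)$, $y_i(t)=C_i x_i(t)+\nu_i(t)$, $t\in\mathbb{N}$, with $x_i\in\mathbb{R}^{n_i}$, $u_i\in\mathbb{R}^m$, $w_i\in\mathbb{R}^{l_i}$, $y_i,\nu_i\in\mathbb{R}^p$; $w_i(t)\sim\mathcal{N}(\mu_i,I_{l_i})$ and $\nu_i(t)\sim\mathcal{N}(0,\Psi_i)$ are white, mutually independent sequences. Let $\tilde n=n_1+n_2$ and $Q_{i,k}=\begin{bmatrix} C_i^T & (C_iA_i)^T & \cdots & (C_iA_i^{k-1})^T\end{bmatrix}^T$ (the $k$-step observability matrix of $(A_i,C_i)$). For an initial state $x_i^0$ and a deterministic input sequence $\mathbf{u}$, let $\mathbf{y}_i|_{x_i^0,\mathbf{u}}$ denote the resulting output stochastic process. $\Sigma_1$ and $\Sigma_2$ have equivalent stochastic external behavior with respect to a subspace $\mathcal{R}\subseteq\mathbb{R}^{n_1}\times\mathbb{R}^{n_2}$ if for every $(x_1^0,x_2^0)\in\mathcal{R}$ and every input $\mathbf{u}$, the processes $\mathbf{y}_1|_{x_1^0,\mathbf{u}}$ and $\mathbf{y}_2|_{x_2^0,\mathbf{u}}$ are stochastically equivalent (all finite-dimensional joint distributions coincide). *)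

theory Defs
  imports "HOL-Analysis.Analysis" "HOL-Probability.Probability"
begin

primrec mat_pow :: "real^'n^'n \<Rightarrow> nat \<Rightarrow> real^'n^'n" where
  "mat_pow A 0 = mat 1"
| "mat_pow A (Suc k) = A ** mat_pow A k"

text \<open>The k-step observability matrix Q_k of (A,C), applied to x: the stacked vector
  [C x; C A x; ...; C A^(k-1) x], represented as a function of the block index
  (blocks with index \<ge> k are set to 0).\<close>
definition obs_map :: "real^'n^'p \<Rightarrow> real^'n^'n \<Rightarrow> nat \<Rightarrow> real^'n \<Rightarrow> nat \<Rightarrow> real^'p" where
  "obs_map C A k x = (\<lambda>j. if j < k then C *v (mat_pow A j *v x) else 0)"

definition obs_ker ::
  "real^'n1^'p \<Rightarrow> real^'n1^'n1 \<Rightarrow> real^'n2^'p \<Rightarrow> real^'n2^'n2 \<Rightarrow> nat \<Rightarrow> ((real^'n1) \<times> (real^'n2)) set" where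
  "obs_ker C1 A1 C2 A2 k = {(x1, x2). obs_map C1 A1 k x1 = obs_map C2 A2 k x2}"

definition normal_measure :: "real \<Rightarrow> real \<Rightarrow> real measure" where
  "normal_measure m v = (if v = 0 then return borel m else density lborel (normal_density m (sqrt v)))"

definition gaussian_vec :: "'a measure \<Rightarrow> ('a \<Rightarrow> real^'l) \<Rightarrow> real^'l \<Rightarrow> real^'l^'l \<Rightarrow> bool" where
  "gaussian_vec M X m S \<longleftrightarrow>
     transpose S = S \<and> (\<forall>a. 0 \<le> a \<bullet> (S *v a)) \<and>
     X \<in> borel_measurable M \<and>
     (\<forall>a. distr M borel (\<lambda>\<omega>. a \<bullet> X \<omega>) = normal_measure (a \<bullet> m) (a \<bullet> (S *v a)))"

text \<open>Noise assumptions of a system on probability space M: w(t) ~ N(mu, I), nu(t) ~ N(0, Psi),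
  and the whole family {w(t), nu(t) : t} is mutually independent (so both sequences are
  white and independent of each other); each variable is embedded into the common space
  R^l x R^p to state this as one independent family indexed by nat + nat.\<close>
definition noise_ok :: "'a measure \<Rightarrow> (nat \<Rightarrow> 'a \<Rightarrow> real^'l) \<Rightarrow> real^'l \<Rightarrow>
    (nat \<Rightarrow> 'a \<Rightarrow> real^'p) \<Rightarrow> real^'p^'p \<Rightarrow> bool" where
  "noise_ok M w mu nu Psi \<longleftrightarrow>
     prob_space M \<and>
     (\<forall>t. gaussian_vec M (w t) mu (mat 1)) \<and>
     (\<forall>t. gaussian_vec M (nu t) 0 Psi) \<and>
     prob_space.indep_vars M (\<lambda>_. borel)
       (\<lambda>i \<omega>. case i of Inl t \<Rightarrow> (w t \<omega>, 0) | Inr t \<Rightarrow> (0, nu t \<omega>)) UNIV"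

primrec state_traj :: "real^'n^'n \<Rightarrow> real^'m^'n \<Rightarrow> real^'l^'n \<Rightarrow> real^'n \<Rightarrow>
    (nat \<Rightarrow> real^'m) \<Rightarrow> (nat \<Rightarrow> 'a \<Rightarrow> real^'l) \<Rightarrow> nat \<Rightarrow> 'a \<Rightarrow> real^'n" where
  "state_traj A B G x0 u w 0 = (\<lambda>\<omega>. x0)"
| "state_traj A B G x0 u w (Suc t) =
     (\<lambda>\<omega>. A *v state_traj A B G x0 u w t \<omega> + B *v u t + G *v w t \<omega>)"

definition output_proc :: "real^'n^'n \<Rightarrow> real^'m^'n \<Rightarrow> real^'l^'n \<Rightarrow> real^'n^'p \<Rightarrow> real^'n \<Rightarrow>
    (nat \<Rightarrow> real^'m) \<Rightarrow> (nat \<Rightarrow> 'a \<Rightarrow> real^'l) \<Rightarrow> (nat \<Rightarrow> 'a \<Rightarrow> real^'p) \<Rightarrow> nat \<Rightarrow> 'a \<Rightarrow> real^'p" where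
  "output_proc A B G C x0 u w nu t = (\<lambda>\<omega>. C *v state_traj A B G x0 u w t \<omega> + nu t \<omega>)"

definition stoch_equiv :: "'a measure \<Rightarrow> (nat \<Rightarrow> 'a \<Rightarrow> 'c::topological_space) \<Rightarrow>
    'b measure \<Rightarrow> (nat \<Rightarrow> 'b \<Rightarrow> 'c) \<Rightarrow> bool" where
  "stoch_equiv M1 Y1 M2 Y2 \<longleftrightarrow>
     (\<forall>(k::nat) (ts::nat \<Rightarrow> nat).
        distr M1 (Pi\<^sub>M {..<k} (\<lambda>_. borel)) (\<lambda>\<omega>. restrict (\<lambda>j. Y1 (ts j) \<omega>) {..<k}) =
        distr M2 (Pi\<^sub>M {..<k} (\<lambda>_. borel)) (\<lambda>\<omega>. restrict (\<lambda>j. Y2 (ts j) \<omega>) {..<k}))"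

end

theory Submission
  imports Defs
begin


lemma inner_mv_transpose: "(a::real^'p) \<bullet> (X *v w) = (transpose X *v a) \<bullet> w"
  by (metis dot_lmul_matrix vector_transpose_matrix transpose_transpose)

lemma mat_pow_Suc_mv: "mat_pow A (Suc k) *v x = A *v (mat_pow A k *v x)"
  by (simp add: matrix_vector_mul_assoc)

lemma state_closed:
  "state_traj A B G x0 u w t \<omega> = mat_pow A t *v x0 +
     (\<Sum>r<t. mat_pow A (t - 1 - r) *v (B *v u r + G *v w r \<omega>))"
proof (induction t)
  case 0 then show ?case by (simp add: matrix_vector_mul_lid)
next
  case (Suc t)
  have "(\<Sum>r<Suc t. mat_pow A (Suc t - 1 - r) *v (B *v u r + G *v w r \<omega>))
      = A *v (\<Sum>r<t. mat_pow A (t - 1 - r) *v (B *v u r + G *v w r \<omega>)) + (B *v u t + G *v w t \<omega>)"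
  proof -
    have "(\<Sum>r<t. mat_pow A (Suc t - 1 - r) *v (B *v u r + G *v w r \<omega>))
       = (\<Sum>r<t. A *v (mat_pow A (t - 1 - r) *v (B *v u r + G *v w r \<omega>)))"
      by (intro sum.cong refl) (simp add: Suc_diff_Suc mat_pow_Suc_mv[symmetric])
    also have "\<dots> = A *v (\<Sum>r<t. mat_pow A (t - 1 - r) *v (B *v u r + G *v w r \<omega>))"
      by (rule linear_sum[OF matrix_vector_mul_linear, symmetric])
    finally show ?thesis by (simp add: matrix_vector_mul_lid)
  qed
  then show ?case using Suc
    by (simp add: matrix_vector_mul_assoc matrix_vector_right_distrib algebra_simps)
qed

lemma linear_factor:
  fixes F1 :: "'a::euclidean_space \<Rightarrow> 'b::euclidean_space" and F2 :: "'a \<Rightarrow> 'c::euclidean_space"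
  assumes l1: "linear F1" and l2: "linear F2" and k: "\<And>x. F1 x = 0 \<Longrightarrow> F2 x = 0"
  shows "\<exists>T. linear T \<and> (\<forall>x. T (F1 x) = F2 x)"
proof -
  define K where "K = {x. F1 x = 0}"
  define V where "V = {y. \<forall>x\<in>K. orthogonal x y}"
  have sK: "subspace K" unfolding K_def using l1
    by (simp add: linear_subspace_kernel)
  have sV: "subspace V" unfolding V_def by (rule subspace_orthogonal_to_vectors)
  have inj: "inj_on F1 V"
  proof (rule linear_inj_on_iff_eq_0[THEN iffD2, OF l1 sV], intro ballI impI)
    fix z assume "z \<in> V" "F1 z = 0"
    then have "z \<in> K" "orthogonal z z" unfolding K_def V_def by auto
    then show "z = 0" by (simp add: orthogonal_def)
  qed
  obtain g where g: "linear g" "\<forall>v\<in>V. g (F1 v) = v"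
    using linear_exists_left_inverse_on[OF l1 sV inj] by blast
  show ?thesis
  proof (intro exI conjI allI)
    show "linear (F2 \<circ> g)" using g l2 by (simp add: linear_compose)
    fix x
    obtain y z where yz: "y \<in> span K" "\<And>w. w \<in> span K \<Longrightarrow> orthogonal z w" "x = y + z"
      using orthogonal_subspace_decomp_exists by blast
    have yK: "y \<in> K" using yz(1) sK span_eq_iff by blast
    have zV: "z \<in> V" unfolding V_def using yz(2) span_base orthogonal_commute by blast
    have "F1 x = F1 z" using yz(3) yK l1 unfolding K_def by (simp add: linear_add)
    then have "(F2 \<circ> g) (F1 x) = F2 z" using g zV by simp
    also have "\<dots> = F2 x" using yz(3) yK k l2 unfolding K_def by (simp add: linear_add)
    finally show "(F2 \<circ> g) (F1 x) = F2 x" .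
  qed
qed



lemma normal_measure_moments:
  assumes v: "0 \<le> v"
  shows "integrable (normal_measure m v) (\<lambda>x. x) \<and> integral\<^sup>L (normal_measure m v) (\<lambda>x. x) = m \<and>
         integrable (normal_measure m v) (\<lambda>x. x^2) \<and> integral\<^sup>L (normal_measure m v) (\<lambda>x. x^2) = v + m^2"
proof (cases "v = 0")
  case True
  then show ?thesis
    by (simp add: normal_measure_def integral_return integrable_iff_bounded nn_integral_return)
next
  case False
  define s where "s = sqrt v"
  have s: "0 < s" using v False by (simp add: s_def)
  have vs: "v = s^2" using v by (simp add: s_def)
  have nm: "normal_measure m v = density lborel (normal_density m s)"
    using False by (simp add: normal_measure_def s_def)
  have i1: "integrable lborel (\<lambda>x. normal_density m s x * x)"
    using integrable_normal_moment_nz_1[OF s] .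
  have e1: "integral\<^sup>L lborel (\<lambda>x. normal_density m s x * x) = m"
    using integral_normal_moment_nz_1[OF s] .
  have i2a: "integrable lborel (\<lambda>x. normal_density m s x * (x - m)^2)"
    using integrable_normal_moment[OF s, of m 2] .
  have e2a: "integral\<^sup>L lborel (\<lambda>x. normal_density m s x * (x - m)^2) = s^2"
    using integral_normal_moment_even[OF s, of m 1] by (simp add: power2_eq_square)
  have i0: "integrable lborel (normal_density m s)" using integrable_normal_density[OF s] by simp
  have eq: "(\<lambda>x. normal_density m s x * x^2) =
      (\<lambda>x. normal_density m s x * (x - m)^2 + (2*m) * (normal_density m s x * x) - m^2 * normal_density m s x)"
    by (auto simp: fun_eq_iff power2_eq_square algebra_simps)
  have i1': "integrable lborel (\<lambda>x. (2*m) * (normal_density m s x * x))"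
    using integrable_mult_right[OF i1] .
  have i0': "integrable lborel (\<lambda>x. m^2 * normal_density m s x)"
    using integrable_mult_right[OF i0] .
  have iadd: "integrable lborel (\<lambda>x. normal_density m s x * (x - m)^2 + (2*m) * (normal_density m s x * x))"
    using Bochner_Integration.integrable_add[OF i2a i1'] .
  have i2: "integrable lborel (\<lambda>x. normal_density m s x * x^2)"
    unfolding eq using Bochner_Integration.integrable_diff[OF iadd i0'] .
  have "integral\<^sup>L lborel (\<lambda>x. normal_density m s x * x^2)
     = integral\<^sup>L lborel (\<lambda>x. normal_density m s x * (x - m)^2) + (2*m) * integral\<^sup>L lborel (\<lambda>x. normal_density m s x * x)
       - m^2 * integral\<^sup>L lborel (normal_density m s)"
    unfolding eq Bochner_Integration.integral_diff[OF iadd i0'] Bochner_Integration.integral_add[OF i2a i1']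
    by simp
  then have e2: "integral\<^sup>L lborel (\<lambda>x. normal_density m s x * x^2) = v + m^2"
    using e1 e2a vs integral_normal_density[OF s] by (simp add: power2_eq_square)
  show ?thesis unfolding nm
    using i1 e1 i2 e2
    by (simp add: integrable_density integral_density)
qed

lemma gauss_moments:
  assumes P: "prob_space M" and g: "gaussian_vec M X m S"
  shows "integrable M (\<lambda>\<omega>. a \<bullet> X \<omega>) \<and> integral\<^sup>L M (\<lambda>\<omega>. a \<bullet> X \<omega>) = a \<bullet> m \<and>
         integrable M (\<lambda>\<omega>. (a \<bullet> X \<omega>)^2) \<and> integral\<^sup>L M (\<lambda>\<omega>. (a \<bullet> X \<omega>)^2) = a \<bullet> (S *v a) + (a \<bullet> m)^2"
proof -
  have Xm[measurable]: "X \<in> borel_measurable M" and pos: "0 \<le> a \<bullet> (S *v a)"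
    and D: "distr M borel (\<lambda>\<omega>. a \<bullet> X \<omega>) = normal_measure (a \<bullet> m) (a \<bullet> (S *v a))"
    using g unfolding gaussian_vec_def by auto
  have gm: "(\<lambda>\<omega>. a \<bullet> X \<omega>) \<in> borel_measurable M" by measurable
  have I: "integrable M (\<lambda>\<omega>. f (a \<bullet> X \<omega>)) = integrable (normal_measure (a \<bullet> m) (a \<bullet> (S *v a))) f"
    and E: "integral\<^sup>L M (\<lambda>\<omega>. f (a \<bullet> X \<omega>)) = integral\<^sup>L (normal_measure (a \<bullet> m) (a \<bullet> (S *v a))) f"
    if "f \<in> borel_measurable borel" for f :: "real \<Rightarrow> real"
    using integrable_distr_eq[OF gm that] integral_distr[OF gm that] D by auto
  have m1: "(\<lambda>x::real. x) \<in> borel_measurable borel" and m2: "(\<lambda>x::real. x^2) \<in> borel_measurable borel"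
    by auto
  show ?thesis
    using I[OF m1] E[OF m1] I[OF m2] E[OF m2] normal_measure_moments[OF pos, of "a \<bullet> m"]
    by simp
qed



lemma (in prob_space) indep_pair:
  fixes Z :: "'i \<Rightarrow> 'a \<Rightarrow> 'x::topological_space" and f g :: "'x \<Rightarrow> real"
  assumes ind: "indep_vars (\<lambda>_. borel) Z UNIV" and ij: "i \<noteq> j"
    and f: "f \<in> borel_measurable borel" and g: "g \<in> borel_measurable borel"
    and fi: "integrable M (\<lambda>\<omega>. f (Z i \<omega>))" and gi: "integrable M (\<lambda>\<omega>. g (Z j \<omega>))"
  shows "integrable M (\<lambda>\<omega>. f (Z i \<omega>) * g (Z j \<omega>)) \<and>
    (\<integral>\<omega>. f (Z i \<omega>) * g (Z j \<omega>) \<partial>M) = (\<integral>\<omega>. f (Z i \<omega>) \<partial>M) * (\<integral>\<omega>. g (Z j \<omega>) \<partial>M)"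
proof -
  define Y where "Y k = (if k = i then f else g)" for k
  have ind2: "indep_vars (\<lambda>_. borel) (\<lambda>k \<omega>. Y k (Z k \<omega>)) {i, j}"
    by (rule indep_vars_compose2[OF indep_vars_subset[OF ind]]) (auto simp: Y_def f g)
  have int: "\<And>k. k \<in> {i, j} \<Longrightarrow> integrable M (\<lambda>\<omega>. Y k (Z k \<omega>))"
    using fi gi ij by (auto simp: Y_def)
  have p: "\<And>\<omega>. (\<Prod>k\<in>{i,j}. Y k (Z k \<omega>)) = f (Z i \<omega>) * g (Z j \<omega>)"
    using ij by (simp add: Y_def)
  have q: "(\<Prod>k\<in>{i,j}. \<integral>\<omega>. Y k (Z k \<omega>) \<partial>M) = (\<integral>\<omega>. f (Z i \<omega>) \<partial>M) * (\<integral>\<omega>. g (Z j \<omega>) \<partial>M)"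
    using ij by (simp add: Y_def)
  show ?thesis
    using indep_vars_lebesgue_integral[OF _ ind2 int] indep_vars_integrable[OF _ ind2 int]
    unfolding p q by simp
qed

locale noise_sys =
  fixes M :: "'a measure" and w :: "nat \<Rightarrow> 'a \<Rightarrow> real^'l" and mu :: "real^'l"
    and nu :: "nat \<Rightarrow> 'a \<Rightarrow> real^'p" and Psi :: "real^'p^'p"
  assumes N: "noise_ok M w mu nu Psi"
begin

sublocale prob_space M using N by (simp add: noise_ok_def)

definition Z :: "nat + nat \<Rightarrow> 'a \<Rightarrow> (real^'l) \<times> (real^'p)" where
  "Z i \<omega> = (case i of Inl t \<Rightarrow> (w t \<omega>, 0) | Inr t \<Rightarrow> (0, nu t \<omega>))"

lemma indZ: "indep_vars (\<lambda>_. borel) Z UNIV"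
  using N unfolding noise_ok_def Z_def by simp

lemma gw: "gaussian_vec M (w t) mu (mat 1)" and gnu: "gaussian_vec M (nu t) 0 Psi"
  using N unfolding noise_ok_def by auto

lemma w_meas[measurable]: "w t \<in> borel_measurable M"
  using gw unfolding gaussian_vec_def by auto

lemma nu_meas[measurable]: "nu t \<in> borel_measurable M"
  using gnu unfolding gaussian_vec_def by auto

lemma Psi_sym: "transpose Psi = Psi"
  using gnu[of 0] unfolding gaussian_vec_def by auto

lemma W1: "integrable M (\<lambda>\<omega>. a \<bullet> w t \<omega>) \<and> (\<integral>\<omega>. a \<bullet> w t \<omega> \<partial>M) = a \<bullet> mu"
  using gauss_moments[OF prob_space_axioms gw] by blast

lemma Wsq: "integrable M (\<lambda>\<omega>. (a \<bullet> w t \<omega>)^2) \<and> (\<integral>\<omega>. (a \<bullet> w t \<omega>)^2 \<partial>M) = a \<bullet> a + (a \<bullet> mu)^2"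
  using gauss_moments[OF prob_space_axioms gw, of a t] by (simp add: matrix_vector_mul_lid)

lemma N1: "integrable M (\<lambda>\<omega>. a \<bullet> nu t \<omega>) \<and> (\<integral>\<omega>. a \<bullet> nu t \<omega> \<partial>M) = 0"
  using gauss_moments[OF prob_space_axioms gnu] by simp

lemma Nsq: "integrable M (\<lambda>\<omega>. (a \<bullet> nu t \<omega>)^2) \<and> (\<integral>\<omega>. (a \<bullet> nu t \<omega>)^2 \<partial>M) = a \<bullet> (Psi *v a)"
  using gauss_moments[OF prob_space_axioms gnu, of a t] by simp

lemma polar: "(x::real) * y = ((x + y)^2 - x^2 - y^2) / 2"
  by (simp add: power2_eq_square algebra_simps)

lemma W2same: "integrable M (\<lambda>\<omega>. (a \<bullet> w t \<omega>) * (b \<bullet> w t \<omega>)) \<and>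
   (\<integral>\<omega>. (a \<bullet> w t \<omega>) * (b \<bullet> w t \<omega>) \<partial>M) = a \<bullet> b + (a \<bullet> mu) * (b \<bullet> mu)"
proof -
  have eq: "(\<lambda>\<omega>. (a \<bullet> w t \<omega>) * (b \<bullet> w t \<omega>)) =
     (\<lambda>\<omega>. (((a + b) \<bullet> w t \<omega>)^2 - (a \<bullet> w t \<omega>)^2 - (b \<bullet> w t \<omega>)^2) / 2)"
    by (rule ext, subst polar) (simp add: inner_add_left)
  note s1 = Wsq[of "a+b" t] and s2 = Wsq[of a t] and s3 = Wsq[of b t]
  have i: "integrable M (\<lambda>\<omega>. ((a + b) \<bullet> w t \<omega>)^2 - (a \<bullet> w t \<omega>)^2 - (b \<bullet> w t \<omega>)^2)"
    using s1 s2 s3 by (intro Bochner_Integration.integrable_diff) auto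
  have "(\<integral>\<omega>. ((a + b) \<bullet> w t \<omega>)^2 - (a \<bullet> w t \<omega>)^2 - (b \<bullet> w t \<omega>)^2 \<partial>M)
      = ((a+b) \<bullet> (a+b) + ((a+b) \<bullet> mu)^2) - (a \<bullet> a + (a \<bullet> mu)^2) - (b \<bullet> b + (b \<bullet> mu)^2)"
    using s1 s2 s3 Bochner_Integration.integral_diff[OF Bochner_Integration.integrable_diff[OF conjunct1[OF s1] conjunct1[OF s2]] conjunct1[OF s3]]
      Bochner_Integration.integral_diff[OF conjunct1[OF s1] conjunct1[OF s2]] by simp
  also have "\<dots> = 2 * (a \<bullet> b + (a \<bullet> mu) * (b \<bullet> mu))"
    by (simp add: inner_add_left inner_add_right inner_commute power2_eq_square algebra_simps)
  finally show ?thesis unfolding eq using i by simp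
qed

lemma inner_Psi_sym: "b \<bullet> (Psi *v a) = a \<bullet> (Psi *v b)"
  by (metis Psi_sym inner_commute inner_mv_transpose)

lemma N2same: "integrable M (\<lambda>\<omega>. (a \<bullet> nu t \<omega>) * (b \<bullet> nu t \<omega>)) \<and>
   (\<integral>\<omega>. (a \<bullet> nu t \<omega>) * (b \<bullet> nu t \<omega>) \<partial>M) = a \<bullet> (Psi *v b)"
proof -
  have eq: "(\<lambda>\<omega>. (a \<bullet> nu t \<omega>) * (b \<bullet> nu t \<omega>)) =
     (\<lambda>\<omega>. (((a + b) \<bullet> nu t \<omega>)^2 - (a \<bullet> nu t \<omega>)^2 - (b \<bullet> nu t \<omega>)^2) / 2)"
    by (rule ext, subst polar) (simp add: inner_add_left)
  note s1 = Nsq[of "a+b" t] and s2 = Nsq[of a t] and s3 = Nsq[of b t]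
  have i: "integrable M (\<lambda>\<omega>. ((a + b) \<bullet> nu t \<omega>)^2 - (a \<bullet> nu t \<omega>)^2 - (b \<bullet> nu t \<omega>)^2)"
    using s1 s2 s3 by (intro Bochner_Integration.integrable_diff) auto
  have "(\<integral>\<omega>. ((a + b) \<bullet> nu t \<omega>)^2 - (a \<bullet> nu t \<omega>)^2 - (b \<bullet> nu t \<omega>)^2 \<partial>M)
      = (a+b) \<bullet> (Psi *v (a+b)) - a \<bullet> (Psi *v a) - b \<bullet> (Psi *v b)"
    using s1 s2 s3 Bochner_Integration.integral_diff[OF Bochner_Integration.integrable_diff[OF conjunct1[OF s1] conjunct1[OF s2]] conjunct1[OF s3]]
      Bochner_Integration.integral_diff[OF conjunct1[OF s1] conjunct1[OF s2]] by simp
  also have "\<dots> = 2 * (a \<bullet> (Psi *v b))"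
    using inner_Psi_sym[of b a]
    by (simp add: inner_add_left inner_add_right matrix_vector_right_distrib)
  finally show ?thesis unfolding eq using i by simp
qed

lemma indep_gen:
  fixes f g :: "_ \<Rightarrow> real"
  assumes "i \<noteq> j" "f \<in> borel_measurable borel" "g \<in> borel_measurable borel"
    "integrable M (\<lambda>\<omega>. f (Z i \<omega>))" "integrable M (\<lambda>\<omega>. g (Z j \<omega>))"
  shows "integrable M (\<lambda>\<omega>. f (Z i \<omega>) * g (Z j \<omega>)) \<and>
    (\<integral>\<omega>. f (Z i \<omega>) * g (Z j \<omega>) \<partial>M) = (\<integral>\<omega>. f (Z i \<omega>) \<partial>M) * (\<integral>\<omega>. g (Z j \<omega>) \<partial>M)"
  using indep_pair[OF indZ assms] .

lemma mfst: "(\<lambda>z::(real^'l) \<times> (real^'p). a \<bullet> fst z) \<in> borel_measurable borel"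
  by (intro borel_measurable_continuous_onI continuous_intros)

lemma msnd: "(\<lambda>z::(real^'l) \<times> (real^'p). a \<bullet> snd z) \<in> borel_measurable borel"
  by (intro borel_measurable_continuous_onI continuous_intros)

lemma W2: "integrable M (\<lambda>\<omega>. (a \<bullet> w r \<omega>) * (b \<bullet> w q \<omega>)) \<and>
   (\<integral>\<omega>. (a \<bullet> w r \<omega>) * (b \<bullet> w q \<omega>) \<partial>M) = (a \<bullet> mu) * (b \<bullet> mu) + (if r = q then a \<bullet> b else 0)"
proof (cases "r = q")
  case True then show ?thesis using W2same[of a r b] by (simp add: algebra_simps)
next
  case False
  have "integrable M (\<lambda>\<omega>. (\<lambda>z. a \<bullet> fst z) (Z (Inl r) \<omega>) * (\<lambda>z. b \<bullet> fst z) (Z (Inl q) \<omega>)) \<and>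
    (\<integral>\<omega>. (\<lambda>z. a \<bullet> fst z) (Z (Inl r) \<omega>) * (\<lambda>z. b \<bullet> fst z) (Z (Inl q) \<omega>) \<partial>M) =
    (\<integral>\<omega>. (\<lambda>z. a \<bullet> fst z) (Z (Inl r) \<omega>) \<partial>M) * (\<integral>\<omega>. (\<lambda>z. b \<bullet> fst z) (Z (Inl q) \<omega>) \<partial>M)"
    by (rule indep_gen) (use False W1 in \<open>auto simp: Z_def mfst msnd\<close>)
  then show ?thesis using False W1 by (simp add: Z_def)
qed

lemma N2: "integrable M (\<lambda>\<omega>. (a \<bullet> nu t \<omega>) * (b \<bullet> nu s \<omega>)) \<and>
   (\<integral>\<omega>. (a \<bullet> nu t \<omega>) * (b \<bullet> nu s \<omega>) \<partial>M) = (if t = s then a \<bullet> (Psi *v b) else 0)"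
proof (cases "t = s")
  case True then show ?thesis using N2same[of a t b] by simp
next
  case False
  have "integrable M (\<lambda>\<omega>. (\<lambda>z. a \<bullet> snd z) (Z (Inr t) \<omega>) * (\<lambda>z. b \<bullet> snd z) (Z (Inr s) \<omega>)) \<and>
    (\<integral>\<omega>. (\<lambda>z. a \<bullet> snd z) (Z (Inr t) \<omega>) * (\<lambda>z. b \<bullet> snd z) (Z (Inr s) \<omega>) \<partial>M) =
    (\<integral>\<omega>. (\<lambda>z. a \<bullet> snd z) (Z (Inr t) \<omega>) \<partial>M) * (\<integral>\<omega>. (\<lambda>z. b \<bullet> snd z) (Z (Inr s) \<omega>) \<partial>M)"
    by (rule indep_gen) (use False N1 in \<open>auto simp: Z_def mfst msnd\<close>)
  then show ?thesis using False N1 by (simp add: Z_def)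
qed

lemma WN: "integrable M (\<lambda>\<omega>. (a \<bullet> w r \<omega>) * (b \<bullet> nu s \<omega>)) \<and>
   (\<integral>\<omega>. (a \<bullet> w r \<omega>) * (b \<bullet> nu s \<omega>) \<partial>M) = 0"
proof -
  have "integrable M (\<lambda>\<omega>. (\<lambda>z. a \<bullet> fst z) (Z (Inl r) \<omega>) * (\<lambda>z. b \<bullet> snd z) (Z (Inr s) \<omega>)) \<and>
    (\<integral>\<omega>. (\<lambda>z. a \<bullet> fst z) (Z (Inl r) \<omega>) * (\<lambda>z. b \<bullet> snd z) (Z (Inr s) \<omega>) \<partial>M) =
    (\<integral>\<omega>. (\<lambda>z. a \<bullet> fst z) (Z (Inl r) \<omega>) \<partial>M) * (\<integral>\<omega>. (\<lambda>z. b \<bullet> snd z) (Z (Inr s) \<omega>) \<partial>M)"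
    by (rule indep_gen) (use W1 N1 in \<open>auto simp: Z_def mfst msnd\<close>)
  then show ?thesis using W1 N1 by (simp add: Z_def)
qed

end


definition alph :: "real^'n^'n \<Rightarrow> real^'l^'n \<Rightarrow> real^'n^'p \<Rightarrow> real^'p \<Rightarrow> nat \<Rightarrow> real^'l" where
  "alph A G C a j = transpose (C ** mat_pow A j ** G) *v a"

lemma term_inner:
  "a \<bullet> (C *v (mat_pow A j *v (B *v v + G *v x))) =
   a \<bullet> (C *v (mat_pow A j *v (B *v v))) + alph A G C a j \<bullet> x"
proof -
  have "a \<bullet> (C *v (mat_pow A j *v (G *v x))) = a \<bullet> ((C ** mat_pow A j ** G) *v x)"
    by (simp add: matrix_vector_mul_assoc matrix_mul_assoc)
  also have "\<dots> = alph A G C a j \<bullet> x" unfolding alph_def by (rule inner_mv_transpose)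
  finally show ?thesis by (simp add: matrix_vector_right_distrib inner_add_right)
qed

lemma out_inner:
  "a \<bullet> output_proc A B G C 0 u w nu t \<omega> =
    (\<Sum>r<t. a \<bullet> (C *v (mat_pow A (t - 1 - r) *v (B *v u r)))) +
    (\<Sum>r<t. alph A G C a (t - 1 - r) \<bullet> w r \<omega>) + a \<bullet> nu t \<omega>"
  unfolding output_proc_def state_closed
  by (simp add: linear_sum[OF matrix_vector_mul_linear] inner_sum_right inner_add_right
      term_inner sum.distrib)

lemma sum_diag:
  fixes t s :: nat
  shows "(\<Sum>r<t. \<Sum>q<s. (if r = q then f r q else 0)) = (\<Sum>r<min t s. f r r :: real)"
proof -
  have "(\<Sum>r<t. \<Sum>q<s. (if r = q then f r q else 0)) = (\<Sum>r<t. if r < s then f r r else 0)"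
  proof (intro sum.cong refl)
    fix x show "(\<Sum>q<s. if x = q then f x q else 0) = (if x < s then f x x else 0)"
      by (subst sum.delta') auto
  qed
  also have "\<dots> = sum (\<lambda>r. f r r) {r \<in> {..<t}. r < s}"
    by (rule sum.inter_filter[symmetric]) simp
  also have "{r \<in> {..<t}. r < s} = {..<min t s}" by auto
  finally show ?thesis .
qed

context noise_sys
begin

lemma mean_out:
  "integrable M (\<lambda>\<omega>. a \<bullet> output_proc A B G C 0 u w nu t \<omega>) \<and>
   (\<integral>\<omega>. a \<bullet> output_proc A B G C 0 u w nu t \<omega> \<partial>M) =
    (\<Sum>r<t. a \<bullet> (C *v (mat_pow A (t - 1 - r) *v (B *v u r)))) +
    (\<Sum>r<t. alph A G C a (t - 1 - r) \<bullet> mu)"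
proof -
  have i1: "integrable M (\<lambda>\<omega>. \<Sum>r<t. alph A G C a (t - 1 - r) \<bullet> w r \<omega>)"
    using W1 by (intro Bochner_Integration.integrable_sum) auto
  have e1: "(\<integral>\<omega>. (\<Sum>r<t. alph A G C a (t - 1 - r) \<bullet> w r \<omega>) \<partial>M) = (\<Sum>r<t. alph A G C a (t - 1 - r) \<bullet> mu)"
    using W1 by (subst Bochner_Integration.integral_sum) auto
  have i2: "integrable M (\<lambda>\<omega>. a \<bullet> nu t \<omega>)" and e2: "(\<integral>\<omega>. a \<bullet> nu t \<omega> \<partial>M) = 0"
    using N1 by auto
  define c where "c = (\<Sum>r<t. a \<bullet> (C *v (mat_pow A (t - 1 - r) *v (B *v u r))))"
  have ic: "integrable M (\<lambda>\<omega>. c)" by simp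
  show ?thesis
    unfolding out_inner c_def[symmetric]
    using Bochner_Integration.integral_add[OF Bochner_Integration.integrable_add[OF ic i1] i2]
      Bochner_Integration.integral_add[OF ic i1] i1 i2 e1 e2
    by (simp add: prob_space)
qed

lemma mom2:
  "integrable M (\<lambda>\<omega>. ((\<Sum>r<t. \<alpha> r \<bullet> w r \<omega>) + a \<bullet> nu t \<omega>) * ((\<Sum>q<s. \<beta> q \<bullet> w q \<omega>) + b \<bullet> nu s \<omega>)) \<and>
   (\<integral>\<omega>. ((\<Sum>r<t. \<alpha> r \<bullet> w r \<omega>) + a \<bullet> nu t \<omega>) * ((\<Sum>q<s. \<beta> q \<bullet> w q \<omega>) + b \<bullet> nu s \<omega>) \<partial>M) =
    (\<Sum>r<t. \<alpha> r \<bullet> mu) * (\<Sum>q<s. \<beta> q \<bullet> mu) + (\<Sum>r<min t s. \<alpha> r \<bullet> \<beta> r) +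
    (if t = s then a \<bullet> (Psi *v b) else 0)"
proof -
  define P where "P \<omega> = (\<Sum>r<t. \<Sum>q<s. (\<alpha> r \<bullet> w r \<omega>) * (\<beta> q \<bullet> w q \<omega>))" for \<omega>
  define X where "X \<omega> = (\<Sum>r<t. (\<alpha> r \<bullet> w r \<omega>) * (b \<bullet> nu s \<omega>))" for \<omega>
  define Y where "Y \<omega> = (\<Sum>q<s. (\<beta> q \<bullet> w q \<omega>) * (a \<bullet> nu t \<omega>))" for \<omega>
  define V where "V \<omega> = (a \<bullet> nu t \<omega>) * (b \<bullet> nu s \<omega>)" for \<omega>
  have eq: "((\<Sum>r<t. \<alpha> r \<bullet> w r \<omega>) + a \<bullet> nu t \<omega>) * ((\<Sum>q<s. \<beta> q \<bullet> w q \<omega>) + b \<bullet> nu s \<omega>)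
     = P \<omega> + X \<omega> + Y \<omega> + V \<omega>" for \<omega>
  proof -
    have "((\<Sum>r<t. \<alpha> r \<bullet> w r \<omega>) + a \<bullet> nu t \<omega>) * ((\<Sum>q<s. \<beta> q \<bullet> w q \<omega>) + b \<bullet> nu s \<omega>)
      = (\<Sum>r<t. \<alpha> r \<bullet> w r \<omega>) * (\<Sum>q<s. \<beta> q \<bullet> w q \<omega>) + (\<Sum>r<t. \<alpha> r \<bullet> w r \<omega>) * (b \<bullet> nu s \<omega>)
        + (\<Sum>q<s. \<beta> q \<bullet> w q \<omega>) * (a \<bullet> nu t \<omega>) + (a \<bullet> nu t \<omega>) * (b \<bullet> nu s \<omega>)"
      by (simp add: algebra_simps)
    also have "\<dots> = P \<omega> + X \<omega> + Y \<omega> + V \<omega>"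
      unfolding P_def X_def Y_def V_def by (simp only: sum_product) (simp only: sum_distrib_right)
    finally show ?thesis .
  qed
  have iP: "integrable M P" unfolding P_def using W2
    by (intro Bochner_Integration.integrable_sum) auto
  have eP: "integral\<^sup>L M P = (\<Sum>r<t. \<Sum>q<s. (\<alpha> r \<bullet> mu) * (\<beta> q \<bullet> mu) + (if r = q then \<alpha> r \<bullet> \<beta> q else 0))"
  proof -
    have inn: "integrable M (\<lambda>\<omega>. \<Sum>q<s. (\<alpha> r \<bullet> w r \<omega>) * (\<beta> q \<bullet> w q \<omega>))" for r
      using W2 by (intro Bochner_Integration.integrable_sum) auto
    have ein: "(\<integral>\<omega>. (\<Sum>q<s. (\<alpha> r \<bullet> w r \<omega>) * (\<beta> q \<bullet> w q \<omega>)) \<partial>M)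
       = (\<Sum>q<s. (\<alpha> r \<bullet> mu) * (\<beta> q \<bullet> mu) + (if r = q then \<alpha> r \<bullet> \<beta> q else 0))" for r
      using W2 by (subst Bochner_Integration.integral_sum) auto
    show ?thesis unfolding P_def using inn ein
      by (subst Bochner_Integration.integral_sum) auto
  qed
  have eP': "integral\<^sup>L M P = (\<Sum>r<t. \<alpha> r \<bullet> mu) * (\<Sum>q<s. \<beta> q \<bullet> mu) + (\<Sum>r<min t s. \<alpha> r \<bullet> \<beta> r)"
    unfolding eP sum.distrib sum_diag sum_product by simp
  have iX: "integrable M X" unfolding X_def using WN
    by (intro Bochner_Integration.integrable_sum) auto
  have eX: "integral\<^sup>L M X = 0" unfolding X_def using WN
    by (subst Bochner_Integration.integral_sum) auto
  have iY: "integrable M Y" unfolding Y_def using WN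
    by (intro Bochner_Integration.integrable_sum) auto
  have eY: "integral\<^sup>L M Y = 0" unfolding Y_def using WN
    by (subst Bochner_Integration.integral_sum) auto
  have iV: "integrable M V" and eV: "integral\<^sup>L M V = (if t = s then a \<bullet> (Psi *v b) else 0)"
    unfolding V_def using N2 by auto
  have i: "integrable M (\<lambda>\<omega>. P \<omega> + X \<omega> + Y \<omega> + V \<omega>)"
    using iP iX iY iV by auto
  have e: "(\<integral>\<omega>. P \<omega> + X \<omega> + Y \<omega> + V \<omega> \<partial>M) = integral\<^sup>L M P + integral\<^sup>L M X + integral\<^sup>L M Y + integral\<^sup>L M V"
    using iP iX iY iV by simp
  show ?thesis unfolding eq using i e eP' eX eY eV by simp
qed

end


lemma shiftS: "(\<Sum>r<Suc n. f r) = f 0 + (\<Sum>r<n. f (Suc r) :: 'b::comm_monoid_add)"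
  by (induction n) (simp_all add: add.assoc)

lemma vec_eq_inner: "(\<And>a. a \<bullet> x = a \<bullet> (y::'a::real_inner)) \<Longrightarrow> x = y"
  by (metis inner_diff_left inner_diff_right inner_eq_zero_iff right_minus_eq)

lemma alph_inner: "alph A G C a j \<bullet> x = a \<bullet> (C *v (mat_pow A j *v (G *v x)))"
  unfolding alph_def
  by (simp add: dot_lmul_matrix matrix_vector_mul_assoc matrix_mul_assoc)

lemma mv_cont: "continuous_on UNIV (\<lambda>v. (A::real^'n^'m) *v v)"
  by (rule linear_continuous_on) (simp add: linear_conv_bounded_linear[symmetric])

lemma mv_meas[measurable]: "f \<in> borel_measurable M \<Longrightarrow> (\<lambda>x. (A::real^'n^'m) *v f x) \<in> borel_measurable M"
  using measurable_compose[of f M borel "\<lambda>v. A *v v", OF _ borel_measurable_continuous_onI[OF mv_cont]] .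

lemma state_meas:
  assumes [measurable]: "\<And>t. w t \<in> borel_measurable M"
  shows "state_traj A B G x0 u w t \<in> borel_measurable M"
  by (induction t) simp_all

lemma out_meas:
  assumes [measurable]: "\<And>t. w t \<in> borel_measurable M" "\<And>t. nu t \<in> borel_measurable M"
  shows "output_proc A B G C x0 u w nu t \<in> borel_measurable M"
proof -
  note [measurable] = state_meas[OF assms(1)]
  show ?thesis unfolding output_proc_def using assms by measurable
qed

lemma transfer:
  fixes f :: "(nat \<Rightarrow> 'c::{second_countable_topology}) \<Rightarrow> real"
  assumes eq: "stoch_equiv M1 Y1 M2 Y2"
    and m1: "\<And>t. Y1 t \<in> borel_measurable M1" and m2: "\<And>t. Y2 t \<in> borel_measurable M2"
    and f: "f \<in> borel_measurable (Pi\<^sub>M {..<k} (\<lambda>_. borel))"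
  shows "(\<integral>\<omega>. f (restrict (\<lambda>j. Y1 (ts j) \<omega>) {..<k}) \<partial>M1) =
         (\<integral>\<omega>. f (restrict (\<lambda>j. Y2 (ts j) \<omega>) {..<k}) \<partial>M2)"
proof -
  have g1: "(\<lambda>\<omega>. restrict (\<lambda>j. Y1 (ts j) \<omega>) {..<k}) \<in> measurable M1 (Pi\<^sub>M {..<k} (\<lambda>_. borel))"
    using m1 by (intro measurable_restrict) auto
  have g2: "(\<lambda>\<omega>. restrict (\<lambda>j. Y2 (ts j) \<omega>) {..<k}) \<in> measurable M2 (Pi\<^sub>M {..<k} (\<lambda>_. borel))"
    using m2 by (intro measurable_restrict) auto
  have "distr M1 (Pi\<^sub>M {..<k} (\<lambda>_. borel)) (\<lambda>\<omega>. restrict (\<lambda>j. Y1 (ts j) \<omega>) {..<k}) =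
        distr M2 (Pi\<^sub>M {..<k} (\<lambda>_. borel)) (\<lambda>\<omega>. restrict (\<lambda>j. Y2 (ts j) \<omega>) {..<k})"
    using eq unfolding stoch_equiv_def by blast
  then show ?thesis
    using integral_distr[OF g1 f] integral_distr[OF g2 f] by simp
qed

lemma f1_meas: "(\<lambda>g::nat \<Rightarrow> real^'p. a \<bullet> g 0) \<in> borel_measurable (Pi\<^sub>M {..<Suc 0} (\<lambda>_. borel))"
  by (intro borel_measurable_inner borel_measurable_const measurable_component_singleton) auto

lemma f2_meas: "(\<lambda>g::nat \<Rightarrow> real^'p. (a \<bullet> g 0) * (b \<bullet> g 1)) \<in> borel_measurable (Pi\<^sub>M {..<2} (\<lambda>_. borel))"
  by (intro borel_measurable_times borel_measurable_inner borel_measurable_const measurable_component_singleton) auto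



theorem proposition4:
  fixes A1 :: "real^'n1^'n1" and B1 :: "real^'m^'n1" and G1 :: "real^'l1^'n1"
    and C1 :: "real^'n1^'p" and mu1 :: "real^'l1" and Psi1 :: "real^'p^'p"
    and M1 :: "'a measure" and w1 :: "nat \<Rightarrow> 'a \<Rightarrow> real^'l1" and nu1 :: "nat \<Rightarrow> 'a \<Rightarrow> real^'p"
    and A2 :: "real^'n2^'n2" and B2 :: "real^'m^'n2" and G2 :: "real^'l2^'n2"
    and C2 :: "real^'n2^'p" and mu2 :: "real^'l2" and Psi2 :: "real^'p^'p"
    and M2 :: "'b measure" and w2 :: "nat \<Rightarrow> 'b \<Rightarrow> real^'l2" and nu2 :: "nat \<Rightarrow> 'b \<Rightarrow> real^'p"
    and R :: "((real^'n1) \<times> (real^'n2)) set"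
  assumes noise1: "noise_ok M1 w1 mu1 nu1 Psi1"
    and noise2: "noise_ok M2 w2 mu2 nu2 Psi2"
    and R_subspace: "subspace R"
    and equiv: "\<forall>(x1, x2) \<in> R. \<forall>u :: nat \<Rightarrow> real^'m.
                  stoch_equiv M1 (output_proc A1 B1 G1 C1 x1 u w1 nu1)
                              M2 (output_proc A2 B2 G2 C2 x2 u w2 nu2)"
  shows "range (\<lambda>v. (B1 *v v, B2 *v v))
           \<subseteq> obs_ker C1 A1 C2 A2 (CARD('n1) + CARD('n2)) \<and>
         range (\<lambda>c::real. (c *\<^sub>R (G1 *v mu1), c *\<^sub>R (G2 *v mu2)))
           \<subseteq> obs_ker C1 A1 C2 A2 (CARD('n1) + CARD('n2)) \<and>
         (\<exists>H :: real^'l2^'l1. range (\<lambda>v. (G1 *v (H *v v), G2 *v v))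
           \<subseteq> obs_ker C1 A1 C2 A2 (CARD('n1) + CARD('n2)))"
proof -
  interpret S1: noise_sys M1 w1 mu1 nu1 Psi1 by unfold_locales (rule noise1)
  interpret S2: noise_sys M2 w2 mu2 nu2 Psi2 by unfold_locales (rule noise2)
  let ?N = "CARD('n1) + CARD('n2)"
  have eqv: "stoch_equiv M1 (output_proc A1 B1 G1 C1 0 u w1 nu1) M2 (output_proc A2 B2 G2 C2 0 u w2 nu2)"
    for u :: "nat \<Rightarrow> real^'m"
  proof -
    have "(0, 0) \<in> R" using subspace_0[OF R_subspace] by (simp add: zero_prod_def)
    from bspec[OF equiv this]
    have "\<forall>u. stoch_equiv M1 (output_proc A1 B1 G1 C1 0 u w1 nu1) M2 (output_proc A2 B2 G2 C2 0 u w2 nu2)"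
      by (simp only: prod.case simp_thms)
    then show ?thesis by (rule spec)
  qed
  have m1: "output_proc A1 B1 G1 C1 0 u w1 nu1 t \<in> borel_measurable M1" for u t
    by (rule out_meas[OF S1.w_meas S1.nu_meas])
  have m2: "output_proc A2 B2 G2 C2 0 u w2 nu2 t \<in> borel_measurable M2" for u t
    by (rule out_meas[OF S2.w_meas S2.nu_meas])
  have MEAN: "(\<Sum>r<t. a \<bullet> (C1 *v (mat_pow A1 (t - 1 - r) *v (B1 *v u r)))) +
    (\<Sum>r<t. alph A1 G1 C1 a (t - 1 - r) \<bullet> mu1) =
    (\<Sum>r<t. a \<bullet> (C2 *v (mat_pow A2 (t - 1 - r) *v (B2 *v u r)))) +
    (\<Sum>r<t. alph A2 G2 C2 a (t - 1 - r) \<bullet> mu2)" for u t a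
  proof -
    have "(\<integral>\<omega>. (\<lambda>g. a \<bullet> g 0) (restrict (\<lambda>j. output_proc A1 B1 G1 C1 0 u w1 nu1 ((\<lambda>_. t) j) \<omega>) {..<Suc 0}) \<partial>M1) =
          (\<integral>\<omega>. (\<lambda>g. a \<bullet> g 0) (restrict (\<lambda>j. output_proc A2 B2 G2 C2 0 u w2 nu2 ((\<lambda>_. t) j) \<omega>) {..<Suc 0}) \<partial>M2)"
      by (rule transfer[OF eqv m1 m2 f1_meas])
    then have "(\<integral>\<omega>. a \<bullet> output_proc A1 B1 G1 C1 0 u w1 nu1 t \<omega> \<partial>M1) =
               (\<integral>\<omega>. a \<bullet> output_proc A2 B2 G2 C2 0 u w2 nu2 t \<omega> \<partial>M2)" by simp
    then show ?thesis unfolding S1.mean_out[THEN conjunct2] S2.mean_out[THEN conjunct2] .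
  qed
  have MEAN0: "(\<Sum>r<t. alph A1 G1 C1 a (t - 1 - r) \<bullet> mu1) = (\<Sum>r<t. alph A2 G2 C2 a (t - 1 - r) \<bullet> mu2)" for t a
    using MEAN[of a t "\<lambda>_. 0"] by simp
  have P1: "C1 *v (mat_pow A1 j *v (B1 *v v)) = C2 *v (mat_pow A2 j *v (B2 *v v))" for v j
  proof (rule vec_eq_inner)
    fix a
    define u where "u r = (if r = 0 then v else 0)" for r :: nat
    have s1: "(\<Sum>r<Suc j. a \<bullet> (C1 *v (mat_pow A1 (Suc j - 1 - r) *v (B1 *v u r)))) = a \<bullet> (C1 *v (mat_pow A1 j *v (B1 *v v)))"
      by (subst shiftS) (simp add: u_def)
    have s2: "(\<Sum>r<Suc j. a \<bullet> (C2 *v (mat_pow A2 (Suc j - 1 - r) *v (B2 *v u r)))) = a \<bullet> (C2 *v (mat_pow A2 j *v (B2 *v v)))"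
      by (subst shiftS) (simp add: u_def)
    show "a \<bullet> (C1 *v (mat_pow A1 j *v (B1 *v v))) = a \<bullet> (C2 *v (mat_pow A2 j *v (B2 *v v)))"
      using MEAN[of a "Suc j" u] MEAN0[of a "Suc j"] unfolding s1 s2 by simp
  qed
  have MR: "(\<Sum>r<t. alph A1 G1 C1 a r \<bullet> mu1) = (\<Sum>r<t. alph A2 G2 C2 a r \<bullet> mu2)" for t a
    using MEAN0[of a t] sum.nat_diff_reindex[of "\<lambda>r. alph A1 G1 C1 a r \<bullet> mu1" t]
      sum.nat_diff_reindex[of "\<lambda>r. alph A2 G2 C2 a r \<bullet> mu2" t] by simp
  have P2': "alph A1 G1 C1 a j \<bullet> mu1 = alph A2 G2 C2 a j \<bullet> mu2" for a j
    using MR[of a "Suc j"] MR[of a j] by simp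
  have P2: "C1 *v (mat_pow A1 j *v (G1 *v mu1)) = C2 *v (mat_pow A2 j *v (G2 *v mu2))" for j
    by (rule vec_eq_inner) (metis P2' alph_inner)
  have Y1e: "a \<bullet> output_proc A1 B1 G1 C1 0 (\<lambda>_. 0) w1 nu1 t \<omega> =
     (\<Sum>r<t. alph A1 G1 C1 a (t - 1 - r) \<bullet> w1 r \<omega>) + a \<bullet> nu1 t \<omega>" for a t \<omega>
    by (simp add: out_inner)
  have Y2e: "a \<bullet> output_proc A2 B2 G2 C2 0 (\<lambda>_. 0) w2 nu2 t \<omega> =
     (\<Sum>r<t. alph A2 G2 C2 a (t - 1 - r) \<bullet> w2 r \<omega>) + a \<bullet> nu2 t \<omega>" for a t \<omega>
    by (simp add: out_inner)
  have SEC: "(\<Sum>r<min t s. alph A1 G1 C1 a (t - 1 - r) \<bullet> alph A1 G1 C1 b (s - 1 - r)) +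
     (if t = s then a \<bullet> (Psi1 *v b) else 0) =
     (\<Sum>r<min t s. alph A2 G2 C2 a (t - 1 - r) \<bullet> alph A2 G2 C2 b (s - 1 - r)) +
     (if t = s then a \<bullet> (Psi2 *v b) else 0)" for t s a b
  proof -
    let ?ts = "\<lambda>j::nat. if j = 0 then t else s"
    have "(\<integral>\<omega>. (\<lambda>g. (a \<bullet> g 0) * (b \<bullet> g 1)) (restrict (\<lambda>j. output_proc A1 B1 G1 C1 0 (\<lambda>_. 0) w1 nu1 (?ts j) \<omega>) {..<2}) \<partial>M1) =
          (\<integral>\<omega>. (\<lambda>g. (a \<bullet> g 0) * (b \<bullet> g 1)) (restrict (\<lambda>j. output_proc A2 B2 G2 C2 0 (\<lambda>_. 0) w2 nu2 (?ts j) \<omega>) {..<2}) \<partial>M2)"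
      by (rule transfer[OF eqv m1 m2 f2_meas])
    then have "(\<integral>\<omega>. (a \<bullet> output_proc A1 B1 G1 C1 0 (\<lambda>_. 0) w1 nu1 t \<omega>) * (b \<bullet> output_proc A1 B1 G1 C1 0 (\<lambda>_. 0) w1 nu1 s \<omega>) \<partial>M1) =
          (\<integral>\<omega>. (a \<bullet> output_proc A2 B2 G2 C2 0 (\<lambda>_. 0) w2 nu2 t \<omega>) * (b \<bullet> output_proc A2 B2 G2 C2 0 (\<lambda>_. 0) w2 nu2 s \<omega>) \<partial>M2)"
      by simp
    then have "(\<integral>\<omega>. ((\<Sum>r<t. alph A1 G1 C1 a (t - 1 - r) \<bullet> w1 r \<omega>) + a \<bullet> nu1 t \<omega>) *
                    ((\<Sum>q<s. alph A1 G1 C1 b (s - 1 - q) \<bullet> w1 q \<omega>) + b \<bullet> nu1 s \<omega>) \<partial>M1) =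
               (\<integral>\<omega>. ((\<Sum>r<t. alph A2 G2 C2 a (t - 1 - r) \<bullet> w2 r \<omega>) + a \<bullet> nu2 t \<omega>) *
                    ((\<Sum>q<s. alph A2 G2 C2 b (s - 1 - q) \<bullet> w2 q \<omega>) + b \<bullet> nu2 s \<omega>) \<partial>M2)"
      unfolding Y1e Y2e .
    then show ?thesis
      unfolding S1.mom2[THEN conjunct2] S2.mom2[THEN conjunct2]
      using MEAN0[of a t] MEAN0[of b s] by simp
  qed
  have PSI: "a \<bullet> (Psi1 *v b) = a \<bullet> (Psi2 *v b)" for a b
    using SEC[of a 0 b 0] by simp
  have KEQ: "(\<Sum>r<min t s. alph A1 G1 C1 a (t - 1 - r) \<bullet> alph A1 G1 C1 b (s - 1 - r)) =
     (\<Sum>r<min t s. alph A2 G2 C2 a (t - 1 - r) \<bullet> alph A2 G2 C2 b (s - 1 - r))" for t s a b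
    using SEC[of a t b s] PSI[of a b] by (cases "t = s") auto
  have PHI: "alph A1 G1 C1 a t \<bullet> alph A1 G1 C1 b s = alph A2 G2 C2 a t \<bullet> alph A2 G2 C2 b s" for t s a b
    using KEQ[of a "Suc t" b "Suc s"] KEQ[of a t b s] by (simp only: min_Suc_Suc shiftS) simp
  obtain hb :: "'n1 + 'n2 \<Rightarrow> nat" where hb: "bij_betw hb UNIV {0..<CARD('n1 + 'n2)}"
    using ex_bij_betw_finite_nat[of "UNIV :: ('n1 + 'n2) set"] by auto
  have cardN: "CARD('n1 + 'n2) = ?N" by (simp add: card_UNIV_sum)
  define F1 where "F1 x = (\<Sum>k\<in>UNIV. alph A1 G1 C1 (x $ k) (hb k))" for x :: "real^'p^('n1 + 'n2)"
  define F2 where "F2 x = (\<Sum>k\<in>UNIV. alph A2 G2 C2 (x $ k) (hb k))" for x :: "real^'p^('n1 + 'n2)"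
  have lF1: "linear F1"
    by (rule linearI) (simp_all add: F1_def alph_def matrix_vector_right_distrib sum.distrib
        matrix_vector_mult_scaleR scaleR_sum_right)
  have lF2: "linear F2"
    by (rule linearI) (simp_all add: F2_def alph_def matrix_vector_right_distrib sum.distrib
        matrix_vector_mult_scaleR scaleR_sum_right)
  have ker: "F2 x = 0" if "F1 x = 0" for x
  proof -
    have "F2 x \<bullet> F2 x = F1 x \<bullet> F1 x"
      unfolding F1_def F2_def by (simp add: inner_sum_left inner_sum_right PHI)
    then show ?thesis using that by simp
  qed
  obtain T where T: "linear T" "\<And>x. T (F1 x) = F2 x"
    using linear_factor[OF lF1 lF2 ker] by blast
  have TP: "T (alph A1 G1 C1 c j) = alph A2 G2 C2 c j" if j: "j < ?N" for j c
  proof -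
    have "j \<in> hb ` UNIV" using hb j cardN unfolding bij_betw_def by simp
    then obtain k where k: "hb k = j" by blast
    define x :: "real^'p^('n1 + 'n2)" where "x = (\<chi> i. if i = k then c else 0)"
    have e1: "F1 x = alph A1 G1 C1 c j"
    proof -
      have "F1 x = (\<Sum>i\<in>UNIV. if i = k then alph A1 G1 C1 c (hb i) else 0)"
        unfolding F1_def x_def by (intro sum.cong refl) (simp add: alph_def)
      then show ?thesis using k by simp
    qed
    have e2: "F2 x = alph A2 G2 C2 c j"
    proof -
      have "F2 x = (\<Sum>i\<in>UNIV. if i = k then alph A2 G2 C2 c (hb i) else 0)"
        unfolding F2_def x_def by (intro sum.cong refl) (simp add: alph_def)
      then show ?thesis using k by simp
    qed
    show ?thesis using T(2)[of x] e1 e2 by simp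
  qed
  define H where "H = transpose (matrix T)"
  have MT: "matrix T *v y = T y" for y
    using matrix_vector_mul(2)[OF T(1)] by metis
  have P3: "C1 *v (mat_pow A1 j *v (G1 *v (H *v v))) = C2 *v (mat_pow A2 j *v (G2 *v v))"
    if "j < ?N" for j v
  proof (rule vec_eq_inner)
    fix c
    have "c \<bullet> (C1 *v (mat_pow A1 j *v (G1 *v (H *v v)))) = alph A1 G1 C1 c j \<bullet> (H *v v)"
      by (simp add: alph_inner)
    also have "\<dots> = (matrix T *v alph A1 G1 C1 c j) \<bullet> v"
      unfolding H_def by (simp only: inner_mv_transpose transpose_transpose)
    also have "\<dots> = alph A2 G2 C2 c j \<bullet> v" using MT TP[OF that] by simp
    also have "\<dots> = c \<bullet> (C2 *v (mat_pow A2 j *v (G2 *v v)))" by (simp add: alph_inner)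
    finally show "c \<bullet> (C1 *v (mat_pow A1 j *v (G1 *v (H *v v)))) = c \<bullet> (C2 *v (mat_pow A2 j *v (G2 *v v)))" .
  qed
  show ?thesis
  proof (intro conjI)
    show "range (\<lambda>v. (B1 *v v, B2 *v v)) \<subseteq> obs_ker C1 A1 C2 A2 ?N"
      by (auto simp: obs_ker_def obs_map_def fun_eq_iff P1)
    show "range (\<lambda>c::real. (c *\<^sub>R (G1 *v mu1), c *\<^sub>R (G2 *v mu2))) \<subseteq> obs_ker C1 A1 C2 A2 ?N"
      by (auto simp: obs_ker_def obs_map_def fun_eq_iff matrix_vector_mult_scaleR P2)
    show "\<exists>H :: real^'l2^'l1. range (\<lambda>v. (G1 *v (H *v v), G2 *v v)) \<subseteq> obs_ker C1 A1 C2 A2 ?N"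
      by (rule exI[of _ H]) (auto simp: obs_ker_def obs_map_def fun_eq_iff P3)
  qed
qed


end
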